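(* Let $M$ be a commutative monoid and $\mathcal{A}$ an $\mathbb{H}M$-module. For every $r\ge2$, $H^r(M,r;\mathcal{A})\cong H^1(M,1;\mathcal{A})$.
   Context: Let $M$ be a commutative monoid with identity $e$. $\mathbb{H}M$ has objects the elements of $M$ and morphisms $(x,y):x\to xy$, composition $(xy,z)(x,y)=(x,yz)$. An $\mathbb{H}M$-module $\mathcal{A}$ is a functor $\mathbb{H}M\to\mathbf{Ab}$: groups $\mathcal{A}(x)$ with $y_*:\mathcal{A}(x)\to\mathcal{A}(xy)$, $y_*z_*=(yz)_*$, $e_*=\mathrm{id}$. Tensor product $(\mathcal{A}\otimes_{\mathbb{H}M}\mathcal{B})(x)=\bigoplus_{zt=x}\mathcal{A}(z)\otimes\mathcal{B}(t)/(u_*a\otimes b=a\otimes u_*b)$; unit the constant module $\mathbb{Z}$; chain complexes of $\mathbb{H}M$-modules form a symmetric monoidal category with Koszul signs. A commutative DGA-algebra over $\mathbb{H}M$ is a commutative monoid $(\mathcal{A},\circ,\iota)$ there with a monoid morphism $\epsilon:\mathcal{A}\to\mathbb{Z}$, $\epsilon_x(a)=\tilde\epsilon(a)x$. Its reduced bar construction $\mathbf{B}(\mathcal{A})$ has $\mathbf{B}(\mathcal{A})_n(x)$ generated by $[\,]$ (degree $0$) and $[a_1|\cdots|a_p]$ with $a_i\in(\mathrm{coker}\,\iota)_{r_i}(x_i)$, $x_1\cdots x_p=x$, $p+\sum r_i=n$; differential $\partial[a_1|\cdots|a_p]=-\sum_i(-1)^{e_{i-1}}[\cdots|\partial a_i|\cdots]+\tilde\epsilon(a_1)x_{1*}[a_2|\cdots]+\sum_{i<p}(-1)^{e_i}[\cdots|a_i\circ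 a_{i+1}|\cdots]+(-1)^{e_p}\tilde\epsilon(a_p)x_{p*}[\cdots|a_{p-1}]$, $e_i=i+r_1+\cdots+r_i$; multiplication the signed shuffle product $[a_1|\cdots|a_p]\circ[a_{p+1}|\cdots|a_{p+q}]=\sum_\sigma(-1)^{e(\sigma)}[a_{\sigma^{-1}(1)}|\cdots|a_{\sigma^{-1}(p+q)}]$, $e(\sigma)=\sum_{\sigma(i)>\sigma(p+j)}(1+r_i)(1+r_{p+j})$; unit $[\,]$; augmentation $\mathbf{B}(\mathcal{A})_0\cong\mathbb{Z}$. It is again such an algebra, so $\mathbf{B}^r$ is defined. $\mathcal{Z}M$: $\mathcal{Z}M(x)$ free abelian on $\{(u,v):uv=x\}$, $y_*(u,v)=(yu,v)$, $(u,v)\circ(w,t)=(uw,vt)$, unit $(e,e)$, degree $0$, augmentation $(u,v)\mapsto$ generator of $\mathbb{Z}(x)$. $H^n(M,r;\mathcal{A})=H^n(\mathrm{Hom}_{\mathbb{H}M}(\mathbf{B}^r(\mathcal{Z}M),\mathcal{A}))$. *)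

theory Defs
  imports "HOL-Library.Poly_Mapping" "HOL-Algebra.Coset"
begin

text \<open>An HM-module A is given by abelian groups A(x) (HOL-Algebra groups Ag x, all with
  elements in one ambient type) together with the maps y_* : A(x) \<rightarrow> A(xy),
  written Ap x y, satisfying y_* z_* = (yz)_* and e_* = id.\<close>

definition HM_module :: "('m::comm_monoid_mult \<Rightarrow> 'a monoid) \<Rightarrow> ('m \<Rightarrow> 'm \<Rightarrow> 'a \<Rightarrow> 'a) \<Rightarrow> bool" where
  "HM_module Ag Ap \<longleftrightarrow>
     (\<forall>x. comm_group (Ag x)) \<and>
     (\<forall>x y. Ap x y \<in> hom (Ag x) (Ag (x * y))) \<and>
     (\<forall>x a. a \<in> carrier (Ag x) \<longrightarrow> Ap x 1 a = a) \<and>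
     (\<forall>x y z a. a \<in> carrier (Ag x) \<longrightarrow> Ap (x * y) z (Ap x y a) = Ap x (y * z) a)"

text \<open>All algebras B^k(ZM) are free HM-modules.  A basis element u_* g of B^k(ZM)(x)
  is represented by a pair (u, g) with u * wt g = x, where g is a generator:
  at level 0, Z v stands for (e,v) \<in> ZM(v); at level k+1, W [g1,...,gp] stands for the
  bar word [g1|...|gp] of non-unit level-k generators (these form a basis of coker \<iota>).\<close>

datatype 'm gen = Z 'm | W "'m gen list"

fun glist :: "'m gen \<Rightarrow> 'm gen list" where
  "glist (W gs) = gs"
| "glist (Z v) = []"

fun zval :: "'m gen \<Rightarrow> 'm" where
  "zval (Z v) = v"
| "zval (W gs) = undefined"

fun wt :: "'m::comm_monoid_mult gen \<Rightarrow> 'm" where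
  "wt (Z v) = v"
| "wt (W gs) = prod_list (map wt gs)"

fun deg :: "'m gen \<Rightarrow> nat" where
  "deg (Z v) = 0"
| "deg (W gs) = length gs + sum_list (map deg gs)"

definition isunit :: "nat \<Rightarrow> 'm::comm_monoid_mult gen \<Rightarrow> bool" where
  "isunit k g = (if k = 0 then g = Z 1 else g = W [])"

fun valid :: "nat \<Rightarrow> 'm::comm_monoid_mult gen \<Rightarrow> bool" where
  "valid 0 g = (\<exists>v. g = Z v)"
| "valid (Suc k) g = (\<exists>gs. g = W gs \<and> (\<forall>h\<in>set gs. valid k h \<and> \<not> isunit k h))"

definition eps :: "nat \<Rightarrow> 'm gen \<Rightarrow> int" where
  "eps k g = (if k = 0 then 1 else if glist g = [] then 1 else 0)"

text \<open>Signed shuffles: sign (-1)^e(\<sigma>) with e(\<sigma>) = sum over inversions of (1+r_i)(1+r_{p+j}).\<close>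
fun shuf :: "'m gen list \<Rightarrow> 'm gen list \<Rightarrow> (int \<times> 'm gen list) list" where
  "shuf [] ys = [(1, ys)]"
| "shuf (x # xs) [] = [(1, x # xs)]"
| "shuf (x # xs) (y # ys) =
     map (\<lambda>(s, l). (s, x # l)) (shuf xs (y # ys)) @
     map (\<lambda>(s, l). ((-1) ^ ((1 + deg y) * sum_list (map (\<lambda>z. 1 + deg z) (x # xs))) * s, y # l))
       (shuf (x # xs) ys)"

type_synonym 'm chain = "('m \<times> 'm gen) \<Rightarrow>\<^sub>0 int"

definition gmul :: "nat \<Rightarrow> 'm::comm_monoid_mult gen \<Rightarrow> 'm gen \<Rightarrow> 'm chain" where
  "gmul k g h =
    (if k = 0 then frag_of (1, Z (zval g * zval h))
     else sum_list (map (\<lambda>(s, l). frag_cmul s (frag_of (1, W l))) (shuf (glist g) (glist h))))"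

definition pushc :: "'m::comm_monoid_mult \<Rightarrow> 'm chain \<Rightarrow> 'm chain" where
  "pushc y c = frag_extend (\<lambda>(u, g). frag_of (y * u, g)) c"

definition Eidx :: "'m gen list \<Rightarrow> nat \<Rightarrow> nat" where
  "Eidx gs j = j + sum_list (map deg (take j gs))"

text \<open>Differential of a generator at level k (bar differential at levels k \<ge> 1;
  components equal to the unit of the previous level vanish in coker \<iota>).\<close>
primrec bdg :: "nat \<Rightarrow> 'm::comm_monoid_mult gen \<Rightarrow> 'm chain" where
  "bdg 0 g = 0"
| "bdg (Suc k) g =
    (let gs = glist g; p = length gs in
      frag_cmul (-1) (sum_list (map (\<lambda>i. frag_cmul ((-1) ^ Eidx gs i)
          (frag_extend (\<lambda>(u, h). if isunit k h then 0 else frag_of (u, W (gs[i := h])))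
             (bdg k (gs ! i)))) [0..<p]))
    + (if p = 0 then 0 else frag_cmul (eps k (hd gs)) (frag_of (wt (hd gs), W (tl gs))))
    + sum_list (map (\<lambda>i. frag_cmul ((-1) ^ Eidx gs (Suc i))
          (frag_extend (\<lambda>(u, h). if isunit k h then 0
                                  else frag_of (u, W (take i gs @ h # drop (Suc (Suc i)) gs)))
             (gmul k (gs ! i) (gs ! Suc i)))) [0..<p - 1])
    + (if p = 0 then 0 else frag_cmul ((-1) ^ Eidx gs p * eps k (last gs))
                                      (frag_of (wt (last gs), W (butlast gs)))))"

definition bdc :: "nat \<Rightarrow> 'm::comm_monoid_mult chain \<Rightarrow> 'm chain" where
  "bdc r c = frag_extend (\<lambda>(u, g). pushc u (bdg r g)) c"

definition Bcar :: "nat \<Rightarrow> nat \<Rightarrow> 'm::comm_monoid_mult \<Rightarrow> 'm chain set" where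
  "Bcar r n x = {c. \<forall>(u, g) \<in> Poly_Mapping.keys c. valid r g \<and> deg g = n \<and> u * wt g = x}"

definition Bgrp :: "nat \<Rightarrow> nat \<Rightarrow> 'm::comm_monoid_mult \<Rightarrow> 'm chain monoid" where
  "Bgrp r n x = \<lparr>carrier = Bcar r n x, mult = (+), one = 0\<rparr>"

definition Cochains :: "nat \<Rightarrow> nat \<Rightarrow> ('m::comm_monoid_mult \<Rightarrow> 'a monoid) \<Rightarrow> ('m \<Rightarrow> 'm \<Rightarrow> 'a \<Rightarrow> 'a)
    \<Rightarrow> ('m \<Rightarrow> 'm chain \<Rightarrow> 'a) set" where
  "Cochains r n Ag Ap = {f.
     (\<forall>x. f x \<in> hom (Bgrp r n x) (Ag x)) \<and>
     (\<forall>x y c. c \<in> Bcar r n x \<longrightarrow> f (x * y) (pushc y c) = Ap x y (f x c)) \<and>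
     (\<forall>x c. c \<notin> Bcar r n x \<longrightarrow> f x c = undefined)}"

definition Cgrp :: "nat \<Rightarrow> nat \<Rightarrow> ('m::comm_monoid_mult \<Rightarrow> 'a monoid) \<Rightarrow> ('m \<Rightarrow> 'm \<Rightarrow> 'a \<Rightarrow> 'a)
    \<Rightarrow> ('m \<Rightarrow> 'm chain \<Rightarrow> 'a) monoid" where
  "Cgrp r n Ag Ap =
    \<lparr>carrier = Cochains r n Ag Ap,
     mult = (\<lambda>f g. \<lambda>x c. if c \<in> Bcar r n x then f x c \<otimes>\<^bsub>Ag x\<^esub> g x c else undefined),
     one = (\<lambda>x c. if c \<in> Bcar r n x then \<one>\<^bsub>Ag x\<^esub> else undefined)\<rparr>"

definition cobd :: "nat \<Rightarrow> nat \<Rightarrow> ('m::comm_monoid_mult \<Rightarrow> 'm chain \<Rightarrow> 'a) \<Rightarrow> ('m \<Rightarrow> 'm chain \<Rightarrow> 'a)" where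
  "cobd r n f = (\<lambda>x c. if c \<in> Bcar r (Suc n) x then f x (bdc r c) else undefined)"

definition cocycles :: "nat \<Rightarrow> nat \<Rightarrow> ('m::comm_monoid_mult \<Rightarrow> 'a monoid) \<Rightarrow> ('m \<Rightarrow> 'm \<Rightarrow> 'a \<Rightarrow> 'a)
    \<Rightarrow> ('m \<Rightarrow> 'm chain \<Rightarrow> 'a) set" where
  "cocycles r n Ag Ap = {f \<in> Cochains r n Ag Ap. cobd r n f = \<one>\<^bsub>Cgrp r (Suc n) Ag Ap\<^esub>}"

definition coboundaries :: "nat \<Rightarrow> nat \<Rightarrow> ('m::comm_monoid_mult \<Rightarrow> 'a monoid) \<Rightarrow> ('m \<Rightarrow> 'm \<Rightarrow> 'a \<Rightarrow> 'a)
    \<Rightarrow> ('m \<Rightarrow> 'm chain \<Rightarrow> 'a) set" where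
  "coboundaries r n Ag Ap =
    (case n of 0 \<Rightarrow> {\<one>\<^bsub>Cgrp r 0 Ag Ap\<^esub>} | Suc m \<Rightarrow> cobd r m ` Cochains r m Ag Ap)"

definition HMcoh :: "nat \<Rightarrow> nat \<Rightarrow> ('m::comm_monoid_mult \<Rightarrow> 'a monoid) \<Rightarrow> ('m \<Rightarrow> 'm \<Rightarrow> 'a \<Rightarrow> 'a)
    \<Rightarrow> ('m \<Rightarrow> 'm chain \<Rightarrow> 'a) set monoid" where
  "HMcoh n r Ag Ap = (Cgrp r n Ag Ap)\<lparr>carrier := cocycles r n Ag Ap\<rparr> Mod coboundaries r n Ag Ap"

end

theory Submission
  imports Defs
begin


fun up :: "nat \<Rightarrow> 'm gen \<Rightarrow> 'm gen" where
  "up 0 g = g" | "up (Suc k) g = W [up k g]"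

fun down :: "nat \<Rightarrow> 'm gen \<Rightarrow> 'm gen" where
  "down 0 g = g" | "down (Suc k) g = down k (hd (glist g))"

lemma down_up[simp]: "down k (up k g) = g" by (induct k) auto
lemma wt_up[simp]: "wt (up k g) = wt g" by (induct k) auto
lemma deg_up[simp]: "deg (up k g) = k + deg g" by (induct k) auto
lemma up_ne[simp]: "up k (W (y#ys)) \<noteq> W []" by (cases k) auto
lemma glist_up_ne[simp]: "glist (up k (W (y#ys))) \<noteq> []" by (cases k) auto

lemma isunit_Suc: "isunit (Suc k) h \<longleftrightarrow> h = W []" by (simp add: isunit_def)
lemma isunit_0: "isunit 0 h \<longleftrightarrow> h = Z 1" by (simp add: isunit_def)

lemma valid_up: "valid (Suc 0) g \<Longrightarrow> g \<noteq> W [] \<Longrightarrow> valid (Suc k) (up k g) \<and> \<not> isunit (Suc k) (up k g)"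
  by (induct k) (auto simp: isunit_Suc)

lemma sum_deg_ge: "(\<forall>h\<in>set gs. m \<le> deg h) \<Longrightarrow> length gs * m \<le> sum_list (map deg gs)"
  by (induct gs) auto

lemma valid_deg_ge: "valid (Suc k) g \<Longrightarrow> \<not> isunit (Suc k) g \<Longrightarrow> Suc k \<le> deg g"
proof (induct k arbitrary: g)
  case 0
  then obtain gs where g: "g = W gs" "gs \<noteq> []" by (auto simp: isunit_Suc)
  then show ?case by (cases gs) auto
next
  case (Suc k)
  then obtain gs where g: "g = W gs" "gs \<noteq> []" and hs: "\<forall>h\<in>set gs. valid (Suc k) h \<and> \<not> isunit (Suc k) h"
    by (auto simp: isunit_Suc)
  then obtain h t where gs: "gs = h # t" by (cases gs) auto
  have "Suc k \<le> deg h" using Suc hs gs by auto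
  then show ?case using g gs by auto
qed

lemma charT: "valid (Suc k) g \<Longrightarrow> deg g = Suc k \<Longrightarrow> \<exists>v. v \<noteq> 1 \<and> g = up k (W [Z v])"
proof (induct k arbitrary: g)
  case 0
  then obtain gs where g: "g = W gs" and hs: "\<forall>h\<in>set gs. (\<exists>v. h = Z v) \<and> h \<noteq> Z 1"
    by (auto simp: isunit_0)
  have "\<forall>h\<in>set gs. deg h = 0" using hs by auto
  then have "sum_list (map deg gs) = 0" by (simp add: sum_list_eq_0_iff)
  moreover have "deg g = length gs + sum_list (map deg gs)" using g by simp
  ultimately have "length gs = 1" using 0 by linarith
  then obtain h where "gs = [h]" by (auto simp: length_Suc_conv)
  then show ?case using hs g by auto
next
  case (Suc k)
  then obtain gs where g: "g = W gs" and hs: "\<forall>h\<in>set gs. valid (Suc k) h \<and> \<not> isunit (Suc k) h"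
    by auto
  have ge: "\<forall>h\<in>set gs. Suc k \<le> deg h" using hs valid_deg_ge by blast
  have d: "length gs + sum_list (map deg gs) = Suc (Suc k)" using Suc.prems g by simp
  have "length gs * Suc k \<le> sum_list (map deg gs)" using sum_deg_ge ge by blast
  then have "length gs = 1" using d
    by (cases "length gs"; cases "length gs - 1"; auto)
  then obtain h where h: "gs = [h]" by (auto simp: length_Suc_conv)
  then have "deg h = Suc k" "valid (Suc k) h" using d hs by auto
  then obtain v where "v \<noteq> 1" "h = up k (W [Z v])" using Suc.hyps by blast
  then show ?case using g h by auto
qed

lemma charS: "valid (Suc k) g \<Longrightarrow> deg g = Suc (Suc k) \<Longrightarrow> \<exists>a b. a \<noteq> 1 \<and> b \<noteq> 1 \<and> g = up k (W [Z a, Z b])"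
proof (induct k arbitrary: g)
  case 0
  then obtain gs where g: "g = W gs" and hs: "\<forall>h\<in>set gs. (\<exists>v. h = Z v) \<and> h \<noteq> Z 1"
    by (auto simp: isunit_0)
  have "\<forall>h\<in>set gs. deg h = 0" using hs by auto
  then have "sum_list (map deg gs) = 0" by (simp add: sum_list_eq_0_iff)
  moreover have "deg g = length gs + sum_list (map deg gs)" using g by simp
  ultimately have "length gs = 2" using 0 by linarith
  then obtain h1 h2 where "gs = [h1, h2]" by (auto simp: length_Suc_conv numeral_2_eq_2)
  then show ?case using hs g by auto
next
  case (Suc k)
  then obtain gs where g: "g = W gs" and hs: "\<forall>h\<in>set gs. valid (Suc k) h \<and> \<not> isunit (Suc k) h"
    by auto
  have ge: "\<forall>h\<in>set gs. Suc k \<le> deg h" using hs valid_deg_ge by blast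
  have d: "length gs + sum_list (map deg gs) = Suc (Suc (Suc k))" using Suc.prems g by simp
  have "length gs * Suc k \<le> sum_list (map deg gs)" using sum_deg_ge ge by blast
  then have "length gs = 1" using d
    by (cases "length gs"; cases "length gs - 1"; auto)
  then obtain h where h: "gs = [h]" by (auto simp: length_Suc_conv)
  then have "deg h = Suc (Suc k)" "valid (Suc k) h" using d hs by auto
  then obtain a b where "a \<noteq> 1" "b \<noteq> 1" "h = up k (W [Z a, Z b])" using Suc.hyps by blast
  then show ?case using g h by auto
qed

lemma bdg_single: "glist h \<noteq> [] \<Longrightarrow> bdg (Suc (Suc k)) (W [h]) =
   - frag_extend (\<lambda>(u, h'). if h' = W [] then 0 else frag_of (u, W [h'])) (bdg (Suc k) h)"
  unfolding bdg.simps(2)[of "Suc k" "W [h]"]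
  apply (simp add: Let_def Eidx_def eps_def isunit_Suc del: bdg.simps)
  apply (rule frag_extend_eq)
  apply (auto split: prod.splits)
  done

lemma bdg_T: "bdg (Suc k) (up k (W [Z v])) = 0"
proof (induct k)
  case 0
  show ?case by (simp add: Eidx_def eps_def)
next
  case (Suc k)
  show ?case using Suc by (simp add: bdg_single del: bdg.simps)
qed

lemma bdg_S: "bdg (Suc k) (up k (W [Z a, Z b])) = frag_cmul ((-1)^k)
   (frag_of (a, up k (W [Z b])) - (if a * b = 1 then 0 else frag_of (1, up k (W [Z (a*b)])))
    + frag_of (b, up k (W [Z a])))"
proof (induct k)
  case 0
  show ?case by (simp add: Eidx_def eps_def gmul_def isunit_0)
next
  case (Suc k)
  show ?case using Suc by (simp add: bdg_single frag_extend_cmul frag_extend_add frag_extend_diff del: bdg.simps)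
qed


definition km :: "('a \<Rightarrow> 'b) \<Rightarrow> ('a \<Rightarrow>\<^sub>0 int) \<Rightarrow> ('b \<Rightarrow>\<^sub>0 int)" where
  "km g c = frag_extend (frag_of \<circ> g) c"

lemma km_add: "km g (a+b) = km g a + km g b" by (simp add: km_def frag_extend_add)
lemma km_diff: "km g (a-b) = km g a - km g b" by (simp add: km_def frag_extend_diff)
lemma km_minus: "km g (-b) = - km g b" by (simp add: km_def frag_extend_minus)
lemma km_cmul: "km g (frag_cmul s b) = frag_cmul s (km g b)" by (simp add: km_def frag_extend_cmul)
lemma km_0[simp]: "km g 0 = 0" by (simp add: km_def)
lemma km_of[simp]: "km g (frag_of a) = frag_of (g a)" by (simp add: km_def)
lemma km_comp: "km f (km g c) = km (f \<circ> g) c"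
  by (simp add: km_def frag_extend_compose comp_assoc)
lemma km_cong: "(\<And>x. x \<in> Poly_Mapping.keys c \<Longrightarrow> f x = g x) \<Longrightarrow> km f c = km g c"
  unfolding km_def by (rule frag_extend_eq) simp
lemma km_id: "(\<And>x. x \<in> Poly_Mapping.keys c \<Longrightarrow> g x = x) \<Longrightarrow> km g c = c"
proof -
  assume a: "\<And>x. x \<in> Poly_Mapping.keys c \<Longrightarrow> g x = x"
  have "km g c = frag_extend frag_of c" unfolding km_def by (rule frag_extend_eq) (simp add: a)
  then show ?thesis using frag_expansion by metis
qed
lemma keys_km: "Poly_Mapping.keys (km g c) \<subseteq> g ` Poly_Mapping.keys c"
  unfolding km_def using keys_frag_extend[of "frag_of \<circ> g" c] by auto
lemma fe_km: "frag_extend F (km g c) = frag_extend (F \<circ> g) c"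
  by (simp add: km_def frag_extend_compose)

lemma fe_fe: "frag_extend G (frag_extend F c) = frag_extend (\<lambda>x. frag_extend G (F x)) c"
  using subset_UNIV
  by (induction c rule: frag_induction) (auto simp: frag_extend_diff)

lemma frag_cmul_diff2: "frag_cmul s (a - b) = frag_cmul s a - frag_cmul s b"
  by (rule poly_mapping_eqI) (simp add: lookup_minus algebra_simps)

lemma fe_cmul_out: "frag_extend (\<lambda>x. frag_cmul s (F x)) c = frag_cmul s (frag_extend F c)"
  using subset_UNIV
  by (induction c rule: frag_induction) (auto simp: frag_extend_diff frag_cmul_diff2)

lemma km_fe: "km g (frag_extend F c) = frag_extend (\<lambda>x. km g (F x)) c"
  unfolding km_def by (rule fe_fe)

lemma pushc_km: "pushc y c = km (\<lambda>(u,g). (y*u, g)) c"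
  unfolding pushc_def km_def by (rule frag_extend_eq) (auto split: prod.splits)

definition liftc :: "nat \<Rightarrow> 'm chain \<Rightarrow> 'm chain" where
  "liftc k = km (\<lambda>(u,g). (u, up k g))"
definition downc :: "nat \<Rightarrow> 'm chain \<Rightarrow> 'm chain" where
  "downc k = km (\<lambda>(u,g). (u, down k g))"

lemma downc_liftc[simp]: "downc k (liftc k c) = c"
  unfolding downc_def liftc_def km_comp by (rule km_id) (auto simp: split: prod.splits)

lemma liftc_pushc: "liftc k (pushc y c) = pushc y (liftc k c)"
  unfolding liftc_def pushc_km km_comp by (rule km_cong) (auto split: prod.splits)
lemma downc_pushc: "downc k (pushc y c) = pushc y (downc k c)"
  unfolding downc_def pushc_km km_comp by (rule km_cong) (auto split: prod.splits)

lemma Bcar_iff: "c \<in> Bcar r n x \<longleftrightarrow> (\<forall>p \<in> Poly_Mapping.keys c. valid r (snd p) \<and> deg (snd p) = n \<and> fst p * wt (snd p) = x)"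
  by (auto simp: Bcar_def)

lemma Bcar_0[simp]: "0 \<in> Bcar r n x" by (simp add: Bcar_iff)
lemma Bcar_add: "c \<in> Bcar r n x \<Longrightarrow> d \<in> Bcar r n x \<Longrightarrow> c + d \<in> Bcar r n x"
  using keys_add[of c d] unfolding Bcar_iff by blast
lemma Bcar_diff: "c \<in> Bcar r n x \<Longrightarrow> d \<in> Bcar r n x \<Longrightarrow> c - d \<in> Bcar r n x"
  using keys_diff[of c d] unfolding Bcar_iff by blast
lemma Bcar_minus: "c \<in> Bcar r n x \<Longrightarrow> - c \<in> Bcar r n x"
  unfolding Bcar_iff by simp
lemma Bcar_cmul: "c \<in> Bcar r n x \<Longrightarrow> frag_cmul s c \<in> Bcar r n x"
  unfolding Bcar_iff by simp
lemma Bcar_of: "frag_of (u, g) \<in> Bcar r n x \<longleftrightarrow> valid r g \<and> deg g = n \<and> u * wt g = x"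
  unfolding Bcar_iff by simp
lemma Bcar_push: "c \<in> Bcar r n x \<Longrightarrow> pushc y c \<in> Bcar r n (x * y)"
  unfolding Bcar_iff
proof
  fix p assume c: "\<forall>p\<in>Poly_Mapping.keys c. valid r (snd p) \<and> deg (snd p) = n \<and> fst p * wt (snd p) = x"
    and "p \<in> Poly_Mapping.keys (pushc y c)"
  then obtain q where "q \<in> Poly_Mapping.keys c" "p = (y * fst q, snd q)"
    using keys_km[of "\<lambda>(u,g). (y*u, g)" c] unfolding pushc_km by (fastforce split: prod.splits)
  then show "valid r (snd p) \<and> deg (snd p) = n \<and> fst p * wt (snd p) = x * y"
    using c by (auto simp: mult_ac)
qed

lemma fe_closed: "Poly_Mapping.keys c \<subseteq> K \<Longrightarrow> (\<And>p. p \<in> K \<Longrightarrow> F p \<in> Bcar r n x) \<Longrightarrow> frag_extend F c \<in> Bcar r n x"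
  by (induction c rule: frag_induction) (auto simp: frag_extend_diff intro: Bcar_diff)

lemma Bcar_T_keys: "c \<in> Bcar (Suc k) (Suc k) x \<Longrightarrow> p \<in> Poly_Mapping.keys c \<Longrightarrow>
   \<exists>v. v \<noteq> 1 \<and> snd p = up k (W [Z v]) \<and> fst p * v = x"
proof -
  assume c: "c \<in> Bcar (Suc k) (Suc k) x" and p: "p \<in> Poly_Mapping.keys c"
  then have h: "valid (Suc k) (snd p)" "deg (snd p) = Suc k" "fst p * wt (snd p) = x"
    unfolding Bcar_iff by auto
  obtain v where "v \<noteq> 1" "snd p = up k (W [Z v])" using charT[OF h(1,2)] by blast
  then show ?thesis using h(3) by auto
qed

lemma Bcar_S_keys: "c \<in> Bcar (Suc k) (Suc (Suc k)) x \<Longrightarrow> p \<in> Poly_Mapping.keys c \<Longrightarrow>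
   \<exists>a b. a \<noteq> 1 \<and> b \<noteq> 1 \<and> snd p = up k (W [Z a, Z b]) \<and> fst p * (a * b) = x"
proof -
  assume c: "c \<in> Bcar (Suc k) (Suc (Suc k)) x" and p: "p \<in> Poly_Mapping.keys c"
  then have h: "valid (Suc k) (snd p)" "deg (snd p) = Suc (Suc k)" "fst p * wt (snd p) = x"
    unfolding Bcar_iff by auto
  obtain a b where "a \<noteq> 1" "b \<noteq> 1" "snd p = up k (W [Z a, Z b])" using charS[OF h(1,2)] by blast
  then show ?thesis using h(3) by auto
qed

lemma validT: "v \<noteq> 1 \<Longrightarrow> valid (Suc k) (up k (W [Z v]))"
  using valid_up[of "W [Z v]" k] by (auto simp: isunit_0)
lemma validS: "a \<noteq> 1 \<Longrightarrow> b \<noteq> 1 \<Longrightarrow> valid (Suc k) (up k (W [Z a, Z b]))"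
  using valid_up[of "W [Z a, Z b]" k] by (auto simp: isunit_0)

lemma lift_T: "c \<in> Bcar (Suc 0) (Suc 0) x \<Longrightarrow> liftc k c \<in> Bcar (Suc k) (Suc k) x"
proof -
  assume c: "c \<in> Bcar (Suc 0) (Suc 0) x"
  show ?thesis unfolding Bcar_iff
  proof
    fix p assume "p \<in> Poly_Mapping.keys (liftc k c)"
    then obtain q where q: "q \<in> Poly_Mapping.keys c" "p = (fst q, up k (snd q))"
      using keys_km unfolding liftc_def by (fastforce split: prod.splits)
    then obtain v where "v \<noteq> 1" "snd q = W [Z v]" "fst q * v = x" using Bcar_T_keys[OF c] by fastforce
    then show "valid (Suc k) (snd p) \<and> deg (snd p) = Suc k \<and> fst p * wt (snd p) = x"
      using q validT by auto
  qed
qed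

lemma lift_S: "c \<in> Bcar (Suc 0) (Suc (Suc 0)) x \<Longrightarrow> liftc k c \<in> Bcar (Suc k) (Suc (Suc k)) x"
proof -
  assume c: "c \<in> Bcar (Suc 0) (Suc (Suc 0)) x"
  show ?thesis unfolding Bcar_iff
  proof
    fix p assume "p \<in> Poly_Mapping.keys (liftc k c)"
    then obtain q where q: "q \<in> Poly_Mapping.keys c" "p = (fst q, up k (snd q))"
      using keys_km unfolding liftc_def by (fastforce split: prod.splits)
    then obtain a b where "a \<noteq> 1" "b \<noteq> 1" "snd q = W [Z a, Z b]" "fst q * (a * b) = x" using Bcar_S_keys[OF c] by fastforce
    then show "valid (Suc k) (snd p) \<and> deg (snd p) = Suc (Suc k) \<and> fst p * wt (snd p) = x"
      using q validS by auto
  qed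
qed

lemma down_T: "c \<in> Bcar (Suc k) (Suc k) x \<Longrightarrow> downc k c \<in> Bcar (Suc 0) (Suc 0) x \<and> liftc k (downc k c) = c"
proof
  assume c: "c \<in> Bcar (Suc k) (Suc k) x"
  show "downc k c \<in> Bcar (Suc 0) (Suc 0) x" unfolding Bcar_iff
  proof
    fix p assume "p \<in> Poly_Mapping.keys (downc k c)"
    then obtain q where q: "q \<in> Poly_Mapping.keys c" "p = (fst q, down k (snd q))"
      using keys_km unfolding downc_def by (fastforce split: prod.splits)
    then obtain v where "v \<noteq> 1" "snd q = up k (W [Z v])" "fst q * v = x" using Bcar_T_keys[OF c] by blast
    then show "valid (Suc 0) (snd p) \<and> deg (snd p) = Suc 0 \<and> fst p * wt (snd p) = x"
      using q by (auto simp: isunit_0)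
  qed
  show "liftc k (downc k c) = c"
    unfolding downc_def liftc_def km_comp
  proof (rule km_id)
    fix p assume "p \<in> Poly_Mapping.keys c"
    then obtain v where "snd p = up k (W [Z v])" using Bcar_T_keys[OF c] by blast
    then show "((\<lambda>(u, g). (u, up k g)) \<circ> (\<lambda>(u, g). (u, down k g))) p = p" by (cases p) auto
  qed
qed

lemma down_S: "c \<in> Bcar (Suc k) (Suc (Suc k)) x \<Longrightarrow> downc k c \<in> Bcar (Suc 0) (Suc (Suc 0)) x \<and> liftc k (downc k c) = c"
proof
  assume c: "c \<in> Bcar (Suc k) (Suc (Suc k)) x"
  show "downc k c \<in> Bcar (Suc 0) (Suc (Suc 0)) x" unfolding Bcar_iff
  proof
    fix p assume "p \<in> Poly_Mapping.keys (downc k c)"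
    then obtain q where q: "q \<in> Poly_Mapping.keys c" "p = (fst q, down k (snd q))"
      using keys_km unfolding downc_def by (fastforce split: prod.splits)
    then obtain a b where "a \<noteq> 1" "b \<noteq> 1" "snd q = up k (W [Z a, Z b])" "fst q * (a * b) = x" using Bcar_S_keys[OF c] by blast
    then show "valid (Suc 0) (snd p) \<and> deg (snd p) = Suc (Suc 0) \<and> fst p * wt (snd p) = x"
      using q by (auto simp: isunit_0)
  qed
  show "liftc k (downc k c) = c"
    unfolding downc_def liftc_def km_comp
  proof (rule km_id)
    fix p assume "p \<in> Poly_Mapping.keys c"
    then obtain a b where "snd p = up k (W [Z a, Z b])" using Bcar_S_keys[OF c] by blast
    then show "((\<lambda>(u, g). (u, up k g)) \<circ> (\<lambda>(u, g). (u, down k g))) p = p" by (cases p) auto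
  qed
qed

lemma bdc_T: "c \<in> Bcar (Suc k) (Suc k) x \<Longrightarrow> bdc (Suc k) c = 0"
  unfolding bdc_def
proof (rule frag_extend_eq_0)
  fix p assume "c \<in> Bcar (Suc k) (Suc k) x" "p \<in> Poly_Mapping.keys c"
  then obtain v where "snd p = up k (W [Z v])" using Bcar_T_keys by blast
  then show "(\<lambda>(u, g). pushc u (bdg (Suc k) g)) p = 0"
    by (cases p) (simp add: bdg_T pushc_def del: bdg.simps)
qed

lemma bdc_S1: "c \<in> Bcar (Suc 0) (Suc (Suc 0)) x \<Longrightarrow> bdc (Suc 0) c \<in> Bcar (Suc 0) (Suc 0) x"
  unfolding bdc_def
proof (rule fe_closed[OF subset_refl])
  fix p assume c: "c \<in> Bcar (Suc 0) (Suc (Suc 0)) x" "p \<in> Poly_Mapping.keys c"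
  then obtain a b where ab: "a \<noteq> 1" "b \<noteq> 1" "snd p = W [Z a, Z b]" "fst p * (a * b) = x"
    using Bcar_S_keys[where k=0] by fastforce
  have v1: "valid (Suc 0) (W [Z v])" if "v \<noteq> 1" for v using validT[OF that, where k=0] by simp
  obtain u where p: "p = (u, W [Z a, Z b])" using ab by (cases p) auto
  have e: "pushc u (bdg (Suc 0) (W [Z a, Z b])) =
     frag_of (u*a, W [Z b]) - (if a * b = 1 then 0 else frag_of (u, W [Z (a*b)])) + frag_of (u*b, W [Z a])"
    using bdg_S[of 0 a b] by (simp add: pushc_km km_add km_diff del: bdg.simps)
  have ux: "u * (a * b) = x" using ab(4) p by simp
  have ux1: "u * a * b = x" using ux by (simp add: mult.assoc)
  have ux2: "u * b * a = x" using ux by (metis mult.assoc mult.commute)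
  have m1: "frag_of (u*a, W [Z b]) \<in> Bcar (Suc 0) (Suc 0) x"
    unfolding Bcar_of using v1[OF ab(2)] ux1 by simp
  have m2: "frag_of (u*b, W [Z a]) \<in> Bcar (Suc 0) (Suc 0) x"
    unfolding Bcar_of using v1[OF ab(1)] ux2 by simp
  have m3: "(if a * b = 1 then 0 else frag_of (u, W [Z (a*b)])) \<in> Bcar (Suc 0) (Suc 0) x"
    unfolding Bcar_of using v1[of "a*b"] ux by (simp add: Bcar_of)
  show "(\<lambda>(u, g). pushc u (bdg (Suc 0) g)) p \<in> Bcar (Suc 0) (Suc 0) x"
    unfolding p prod.case e by (intro Bcar_add Bcar_diff m1 m2 m3)
qed

lemma bdc_lift: "c \<in> Bcar (Suc 0) (Suc (Suc 0)) x \<Longrightarrow>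
   bdc (Suc k) (liftc k c) = frag_cmul ((-1)^k) (liftc k (bdc (Suc 0) c))"
proof -
  assume c: "c \<in> Bcar (Suc 0) (Suc (Suc 0)) x"
  have "bdc (Suc k) (liftc k c) = frag_extend ((\<lambda>(u, g). pushc u (bdg (Suc k) g)) \<circ> (\<lambda>(u,g). (u, up k g))) c"
    unfolding bdc_def liftc_def by (rule fe_km)
  also have "\<dots> = frag_extend (\<lambda>p. frag_cmul ((-1)^k) (liftc k ((\<lambda>(u, g). pushc u (bdg (Suc 0) g)) p))) c"
  proof (rule frag_extend_eq)
    fix p assume "p \<in> Poly_Mapping.keys c"
    then obtain a b where ab: "snd p = W [Z a, Z b]"
      using Bcar_S_keys[where k=0, OF c] by fastforce
    show "((\<lambda>(u, g). pushc u (bdg (Suc k) g)) \<circ> (\<lambda>(u,g). (u, up k g))) p =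
          frag_cmul ((-1)^k) (liftc k ((\<lambda>(u, g). pushc u (bdg (Suc 0) g)) p))"
      using bdg_S[of k a b] bdg_S[of 0 a b] ab
      by (cases p) (simp add: pushc_km liftc_def km_add km_diff km_cmul del: bdg.simps)
  qed
  also have "\<dots> = frag_cmul ((-1)^k) (liftc k (bdc (Suc 0) c))"
    unfolding fe_cmul_out bdc_def liftc_def km_fe ..
  finally show ?thesis .
qed




lemma HM_group: "HM_module Ag Ap \<Longrightarrow> group (Ag x)"
  unfolding HM_module_def using comm_group.axioms(2) by blast

lemma HM_Aphom: "HM_module Ag Ap \<Longrightarrow> Ap x y \<in> hom (Ag x) (Ag (x*y))"
  unfolding HM_module_def by blast

lemma hom_one_gen: "group G \<Longrightarrow> group H \<Longrightarrow> h \<in> hom G H \<Longrightarrow> h \<one>\<^bsub>G\<^esub> = \<one>\<^bsub>H\<^esub>"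
proof -
  assume G: "group G" and H: "group H" and h: "h \<in> hom G H"
  have o: "\<one>\<^bsub>G\<^esub> \<in> carrier G" using G by (simp add: group.is_monoid monoid.one_closed)
  have c: "h \<one>\<^bsub>G\<^esub> \<in> carrier H" using h o unfolding hom_def by blast
  have e1: "h (\<one>\<^bsub>G\<^esub> \<otimes>\<^bsub>G\<^esub> \<one>\<^bsub>G\<^esub>) = h \<one>\<^bsub>G\<^esub> \<otimes>\<^bsub>H\<^esub> h \<one>\<^bsub>G\<^esub>"
    using h o unfolding hom_def by blast
  have "\<one>\<^bsub>G\<^esub> \<otimes>\<^bsub>G\<^esub> \<one>\<^bsub>G\<^esub> = \<one>\<^bsub>G\<^esub>" using G o by (simp add: group.is_monoid monoid.l_one)
  then have "h \<one>\<^bsub>G\<^esub> = h \<one>\<^bsub>G\<^esub> \<otimes>\<^bsub>H\<^esub> h \<one>\<^bsub>G\<^esub>" using e1 by simp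
  then show ?thesis using c group.l_cancel_one'[OF H c c] by simp
qed

lemma HM_Ap_one: "HM_module Ag Ap \<Longrightarrow> Ap x y \<one>\<^bsub>Ag x\<^esub> = \<one>\<^bsub>Ag (x*y)\<^esub>"
  using hom_one_gen HM_group HM_Aphom by blast

lemma coch_carr: "f \<in> Cochains r n Ag Ap \<Longrightarrow> c \<in> Bcar r n x \<Longrightarrow> f x c \<in> carrier (Ag x)"
  unfolding Cochains_def hom_def Bgrp_def by auto

lemma coch_add: "f \<in> Cochains r n Ag Ap \<Longrightarrow> c \<in> Bcar r n x \<Longrightarrow> d \<in> Bcar r n x \<Longrightarrow>
    f x (c + d) = f x c \<otimes>\<^bsub>Ag x\<^esub> f x d"
  unfolding Cochains_def hom_def Bgrp_def by auto

lemma coch_push: "f \<in> Cochains r n Ag Ap \<Longrightarrow> c \<in> Bcar r n x \<Longrightarrow> f (x * y) (pushc y c) = Ap x y (f x c)"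
  unfolding Cochains_def by auto

lemma coch_out: "f \<in> Cochains r n Ag Ap \<Longrightarrow> c \<notin> Bcar r n x \<Longrightarrow> f x c = undefined"
  unfolding Cochains_def by auto

lemma coch_0: "HM_module Ag Ap \<Longrightarrow> f \<in> Cochains r n Ag Ap \<Longrightarrow> f x 0 = \<one>\<^bsub>Ag x\<^esub>"
proof -
  assume HM: "HM_module Ag Ap" and f: "f \<in> Cochains r n Ag Ap"
  have c: "f x 0 \<in> carrier (Ag x)" using coch_carr[OF f Bcar_0] .
  have "f x 0 = f x 0 \<otimes>\<^bsub>Ag x\<^esub> f x 0" using coch_add[OF f Bcar_0 Bcar_0] by simp
  then show ?thesis using group.l_cancel_one'[OF HM_group[OF HM] c c] by simp
qed

lemma coch_neg: "HM_module Ag Ap \<Longrightarrow> f \<in> Cochains r n Ag Ap \<Longrightarrow> d \<in> Bcar r n x \<Longrightarrow>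
   f x (- d) = \<one>\<^bsub>Ag x\<^esub> \<longleftrightarrow> f x d = \<one>\<^bsub>Ag x\<^esub>"
proof -
  assume HM: "HM_module Ag Ap" and f: "f \<in> Cochains r n Ag Ap" and d: "d \<in> Bcar r n x"
  have G: "group (Ag x)" using HM_group[OF HM] .
  have c1: "f x d \<in> carrier (Ag x)" and c2: "f x (-d) \<in> carrier (Ag x)"
    using coch_carr[OF f d] coch_carr[OF f Bcar_minus[OF d]] by auto
  have "f x d \<otimes>\<^bsub>Ag x\<^esub> f x (-d) = \<one>\<^bsub>Ag x\<^esub>"
    using coch_add[OF f d Bcar_minus[OF d]] coch_0[OF HM f] by simp
  then show ?thesis using c1 c2 G by (auto simp: group.is_monoid monoid.l_one monoid.r_one)
qed

lemma coch_sign: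
  assumes HM: "HM_module Ag Ap" and f: "f \<in> Cochains r n Ag Ap" and d: "d \<in> Bcar r n x"
  shows "f x (frag_cmul ((-1)^k) d) = \<one>\<^bsub>Ag x\<^esub> \<longleftrightarrow> f x d = \<one>\<^bsub>Ag x\<^esub>"
proof (cases "even k")
  case True
  then show ?thesis by simp
next
  case False
  then have "(-1::int)^k = -1" by simp
  then show ?thesis using coch_neg[OF HM f d] by simp
qed

lemma cocycles_iff: "f \<in> cocycles r n Ag Ap \<longleftrightarrow>
   f \<in> Cochains r n Ag Ap \<and> (\<forall>x c. c \<in> Bcar r (Suc n) x \<longrightarrow> f x (bdc r c) = \<one>\<^bsub>Ag x\<^esub>)"
proof -
  have "cobd r n f = \<one>\<^bsub>Cgrp r (Suc n) Ag Ap\<^esub> \<longleftrightarrow> (\<forall>x c. c \<in> Bcar r (Suc n) x \<longrightarrow> f x (bdc r c) = \<one>\<^bsub>Ag x\<^esub>)"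
    unfolding cobd_def Cgrp_def by (simp add: fun_eq_iff)
  then show ?thesis unfolding cocycles_def by blast
qed

lemma triv_coch: "HM_module Ag Ap \<Longrightarrow> (\<lambda>x c. if c \<in> Bcar r n x then \<one>\<^bsub>Ag x\<^esub> else undefined) \<in> Cochains r n Ag Ap"
proof -
  assume HM: "HM_module Ag Ap"
  note G = HM_group[OF HM]
  show ?thesis unfolding Cochains_def hom_def Bgrp_def
    using G HM_Ap_one[OF HM]
    by (auto simp: group.is_monoid monoid.one_closed monoid.l_one Bcar_add Bcar_push)
qed

lemma cobound: "HM_module Ag Ap \<Longrightarrow> coboundaries (Suc k) (Suc k) Ag Ap = {\<one>\<^bsub>Cgrp (Suc k) (Suc k) Ag Ap\<^esub>}"
proof -
  assume HM: "HM_module Ag Ap"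
  have all: "cobd (Suc k) k f = \<one>\<^bsub>Cgrp (Suc k) (Suc k) Ag Ap\<^esub>" if f: "f \<in> Cochains (Suc k) k Ag Ap" for f
    unfolding cobd_def Cgrp_def by (auto simp: fun_eq_iff bdc_T coch_0[OF HM f])
  have "coboundaries (Suc k) (Suc k) Ag Ap = cobd (Suc k) k ` Cochains (Suc k) k Ag Ap"
    by (simp add: coboundaries_def)
  also have "\<dots> = {\<one>\<^bsub>Cgrp (Suc k) (Suc k) Ag Ap\<^esub>}"
  proof -
    have ne: "Cochains (Suc k) k Ag Ap \<noteq> {}" using triv_coch[OF HM, of "Suc k" k] by blast
    have "cobd (Suc k) k ` Cochains (Suc k) k Ag Ap = (\<lambda>_. \<one>\<^bsub>Cgrp (Suc k) (Suc k) Ag Ap\<^esub>) ` Cochains (Suc k) k Ag Ap"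
      using all by (rule image_cong[OF refl])
    then show ?thesis using ne by auto
  qed
  finally show ?thesis .
qed

definition Phi :: "nat \<Rightarrow> ('m::comm_monoid_mult \<Rightarrow> 'm chain \<Rightarrow> 'a) \<Rightarrow> ('m \<Rightarrow> 'm chain \<Rightarrow> 'a)" where
  "Phi k f = (\<lambda>x c. if c \<in> Bcar (Suc 0) (Suc 0) x then f x (liftc k c) else undefined)"
definition Psi :: "nat \<Rightarrow> ('m::comm_monoid_mult \<Rightarrow> 'm chain \<Rightarrow> 'a) \<Rightarrow> ('m \<Rightarrow> 'm chain \<Rightarrow> 'a)" where
  "Psi k g = (\<lambda>x c. if c \<in> Bcar (Suc k) (Suc k) x then g x (downc k c) else undefined)"

lemma liftc_add: "liftc k (a + b) = liftc k a + liftc k b" by (simp add: liftc_def km_add)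
lemma downc_add: "downc k (a + b) = downc k a + downc k b" by (simp add: downc_def km_add)
lemma downc_cmul: "downc k (frag_cmul s b) = frag_cmul s (downc k b)" by (simp add: downc_def km_cmul)

lemma Phi_coch:
  fixes Ag :: "'m::comm_monoid_mult \<Rightarrow> 'z monoid"
  shows "HM_module Ag Ap \<Longrightarrow> f \<in> cocycles (Suc k) (Suc k) Ag Ap \<Longrightarrow> Phi k f \<in> cocycles (Suc 0) (Suc 0) Ag Ap"
proof -
  assume HM: "HM_module Ag Ap" and fc: "f \<in> cocycles (Suc k) (Suc k) Ag Ap"
  then have f: "f \<in> Cochains (Suc k) (Suc k) Ag Ap"
    and cz: "\<And>x c. c \<in> Bcar (Suc k) (Suc (Suc k)) x \<Longrightarrow> f x (bdc (Suc k) c) = \<one>\<^bsub>Ag x\<^esub>"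
    by (auto simp: cocycles_iff)
  have "Phi k f \<in> Cochains (Suc 0) (Suc 0) Ag Ap"
    unfolding Cochains_def hom_def Bgrp_def
  proof (intro CollectI conjI allI impI)
    fix x
    show "Phi k f x \<in> carrier \<lparr>carrier = Bcar (Suc 0) (Suc 0) x, mult = (+), one = 0\<rparr> \<rightarrow> carrier (Ag x)"
      using coch_carr[OF f lift_T] by (auto simp: Phi_def)
    show "\<forall>c\<in>carrier \<lparr>carrier = Bcar (Suc 0) (Suc 0) x, mult = (+), one = 0\<rparr>.
       \<forall>d\<in>carrier \<lparr>carrier = Bcar (Suc 0) (Suc 0) x, mult = (+), one = 0\<rparr>.
       Phi k f x (c \<otimes>\<^bsub>\<lparr>carrier = Bcar (Suc 0) (Suc 0) x, mult = (+), one = 0\<rparr>\<^esub> d) =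
       Phi k f x c \<otimes>\<^bsub>Ag x\<^esub> Phi k f x d"
      using coch_add[OF f lift_T lift_T] by (auto simp: Phi_def liftc_add Bcar_add)
  next
    fix x y :: 'm and c assume c: "c \<in> Bcar (Suc 0) (Suc 0) x"
    show "Phi k f (x * y) (pushc y c) = Ap x y (Phi k f x c)"
      using c Bcar_push[OF c] coch_push[OF f lift_T[OF c]] by (simp add: Phi_def liftc_pushc)
  next
    fix x :: 'm and c assume "c \<notin> Bcar (Suc 0) (Suc 0) x"
    then show "Phi k f x c = undefined" by (simp add: Phi_def)
  qed
  moreover have "Phi k f x (bdc (Suc 0) c) = \<one>\<^bsub>Ag x\<^esub>" if c: "c \<in> Bcar (Suc 0) (Suc (Suc 0)) x" for x c
  proof -
    have b1: "bdc (Suc 0) c \<in> Bcar (Suc 0) (Suc 0) x" using bdc_S1[OF c] .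
    have "f x (frag_cmul ((-1)^k) (liftc k (bdc (Suc 0) c))) = \<one>\<^bsub>Ag x\<^esub>"
      using cz[OF lift_S[OF c]] bdc_lift[OF c] by simp
    then have "f x (liftc k (bdc (Suc 0) c)) = \<one>\<^bsub>Ag x\<^esub>"
      using coch_sign[OF HM f lift_T[OF b1]] by simp
    then show ?thesis using b1 by (simp add: Phi_def)
  qed
  ultimately show ?thesis by (simp add: cocycles_iff)
qed

lemma Psi_coch:
  fixes Ag :: "'m::comm_monoid_mult \<Rightarrow> 'z monoid"
  shows "HM_module Ag Ap \<Longrightarrow> g \<in> cocycles (Suc 0) (Suc 0) Ag Ap \<Longrightarrow> Psi k g \<in> cocycles (Suc k) (Suc k) Ag Ap"
proof -
  assume HM: "HM_module Ag Ap" and gc: "g \<in> cocycles (Suc 0) (Suc 0) Ag Ap"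
  then have g: "g \<in> Cochains (Suc 0) (Suc 0) Ag Ap"
    and cz: "\<And>x c. c \<in> Bcar (Suc 0) (Suc (Suc 0)) x \<Longrightarrow> g x (bdc (Suc 0) c) = \<one>\<^bsub>Ag x\<^esub>"
    by (auto simp: cocycles_iff)
  have "Psi k g \<in> Cochains (Suc k) (Suc k) Ag Ap"
    unfolding Cochains_def hom_def Bgrp_def
  proof (intro CollectI conjI allI impI)
    fix x
    show "Psi k g x \<in> carrier \<lparr>carrier = Bcar (Suc k) (Suc k) x, mult = (+), one = 0\<rparr> \<rightarrow> carrier (Ag x)"
      using coch_carr[OF g conjunct1[OF down_T]] by (auto simp: Psi_def)
    show "\<forall>c\<in>carrier \<lparr>carrier = Bcar (Suc k) (Suc k) x, mult = (+), one = 0\<rparr>.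
       \<forall>d\<in>carrier \<lparr>carrier = Bcar (Suc k) (Suc k) x, mult = (+), one = 0\<rparr>.
       Psi k g x (c \<otimes>\<^bsub>\<lparr>carrier = Bcar (Suc k) (Suc k) x, mult = (+), one = 0\<rparr>\<^esub> d) =
       Psi k g x c \<otimes>\<^bsub>Ag x\<^esub> Psi k g x d"
      using coch_add[OF g conjunct1[OF down_T] conjunct1[OF down_T]] by (auto simp: Psi_def downc_add Bcar_add)
  next
    fix x y :: 'm and c assume c: "c \<in> Bcar (Suc k) (Suc k) x"
    show "Psi k g (x * y) (pushc y c) = Ap x y (Psi k g x c)"
      using c Bcar_push[OF c] coch_push[OF g conjunct1[OF down_T[OF c]]] by (simp add: Psi_def downc_pushc)
  next
    fix x :: 'm and c assume "c \<notin> Bcar (Suc k) (Suc k) x"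
    then show "Psi k g x c = undefined" by (simp add: Psi_def)
  qed
  moreover have "Psi k g x (bdc (Suc k) c) = \<one>\<^bsub>Ag x\<^esub>" if c: "c \<in> Bcar (Suc k) (Suc (Suc k)) x" for x c
  proof -
    obtain c' where c': "c' \<in> Bcar (Suc 0) (Suc (Suc 0)) x" "c = liftc k c'" using down_S[OF c] by metis
    have b1: "bdc (Suc 0) c' \<in> Bcar (Suc 0) (Suc 0) x" using bdc_S1[OF c'(1)] .
    have e: "bdc (Suc k) c = frag_cmul ((-1)^k) (liftc k (bdc (Suc 0) c'))" using bdc_lift[OF c'(1)] c'(2) by simp
    have m: "bdc (Suc k) c \<in> Bcar (Suc k) (Suc k) x" unfolding e by (rule Bcar_cmul[OF lift_T[OF b1]])
    have "Psi k g x (bdc (Suc k) c) = g x (frag_cmul ((-1)^k) (bdc (Suc 0) c'))"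
      using m by (simp add: Psi_def e downc_cmul)
    also have "\<dots> = \<one>\<^bsub>Ag x\<^esub>" using coch_sign[OF HM g b1] cz[OF c'(1)] by simp
    finally show ?thesis .
  qed
  ultimately show ?thesis by (simp add: cocycles_iff)
qed

lemma Phi_Psi: "g \<in> Cochains (Suc 0) (Suc 0) Ag Ap \<Longrightarrow> Phi k (Psi k g) = g"
proof (intro ext)
  fix x c assume g: "g \<in> Cochains (Suc 0) (Suc 0) Ag Ap"
  show "Phi k (Psi k g) x c = g x c"
  proof (cases "c \<in> Bcar (Suc 0) (Suc 0) x")
    case True
    then show ?thesis by (simp add: Phi_def Psi_def lift_T)
  next
    case False
    then show ?thesis by (simp add: Phi_def coch_out[OF g])
  qed
qed

lemma Psi_Phi: "f \<in> Cochains (Suc k) (Suc k) Ag Ap \<Longrightarrow> Psi k (Phi k f) = f"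
proof (intro ext)
  fix x c assume f: "f \<in> Cochains (Suc k) (Suc k) Ag Ap"
  show "Psi k (Phi k f) x c = f x c"
  proof (cases "c \<in> Bcar (Suc k) (Suc k) x")
    case True
    then show ?thesis using down_T[OF True] by (simp add: Phi_def Psi_def)
  next
    case False
    then show ?thesis by (simp add: Psi_def coch_out[OF f])
  qed
qed

lemma Phi_mult: "Phi k (mult (Cgrp (Suc k) (Suc k) Ag Ap) f g) = mult (Cgrp (Suc 0) (Suc 0) Ag Ap) (Phi k f) (Phi k g)"
proof (intro ext)
  fix x c
  show "Phi k (mult (Cgrp (Suc k) (Suc k) Ag Ap) f g) x c = mult (Cgrp (Suc 0) (Suc 0) Ag Ap) (Phi k f) (Phi k g) x c"
  proof (cases "c \<in> Bcar (Suc 0) (Suc 0) x")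
    case True
    then show ?thesis using lift_T[OF True] by (simp add: Phi_def Cgrp_def)
  next
    case False
    then show ?thesis by (simp add: Phi_def Cgrp_def)
  qed
qed

lemma one_mult: "HM_module Ag Ap \<Longrightarrow> f \<in> Cochains r n Ag Ap \<Longrightarrow> mult (Cgrp r n Ag Ap) (one (Cgrp r n Ag Ap)) f = f"
proof (intro ext)
  fix x c assume HM: "HM_module Ag Ap" and f: "f \<in> Cochains r n Ag Ap"
  show "mult (Cgrp r n Ag Ap) (one (Cgrp r n Ag Ap)) f x c = f x c"
  proof (cases "c \<in> Bcar r n x")
    case True
    then show ?thesis using coch_carr[OF f True] HM_group[OF HM, of x]
      by (simp add: Cgrp_def group.is_monoid monoid.l_one)
  next
    case False
    then show ?thesis by (simp add: Cgrp_def coch_out[OF f])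
  qed
qed

lemma mod_carrier:
  assumes HM: "HM_module Ag Ap"
  shows "carrier ((Cgrp r n Ag Ap)\<lparr>carrier := cocycles r n Ag Ap\<rparr> Mod {one (Cgrp r n Ag Ap)}) = (\<lambda>f. {f}) ` cocycles r n Ag Ap"
proof -
  have "{one (Cgrp r n Ag Ap)} #>\<^bsub>(Cgrp r n Ag Ap)\<lparr>carrier := cocycles r n Ag Ap\<rparr>\<^esub> f = {f}"
    if "f \<in> cocycles r n Ag Ap" for f
    using one_mult[OF HM, of f r n] that unfolding r_coset_def cocycles_def by simp
  then show ?thesis unfolding FactGroup_def RCOSETS_def by auto
qed

lemma mod_mult: "mult (G Mod H) {f} {g} = {mult G f g}"
  by (simp add: FactGroup_def set_mult_def)

lemma bij_single:
  assumes "bij_betw F A B"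
  shows "bij_betw (\<lambda>S. F ` S) ((\<lambda>f. {f}) ` A) ((\<lambda>f. {f}) ` B)"
proof (rule bij_betw_imageI)
  show "inj_on (\<lambda>S. F ` S) ((\<lambda>f. {f}) ` A)"
  proof (rule inj_onI)
    fix S T assume "S \<in> (\<lambda>f. {f}) ` A" "T \<in> (\<lambda>f. {f}) ` A" "F ` S = F ` T"
    then obtain a b where "S = {a}" "T = {b}" "a \<in> A" "b \<in> A" "F a = F b" by auto
    then show "S = T" using assms unfolding bij_betw_def inj_on_def by auto
  qed
  have "(\<lambda>S. F ` S) ` ((\<lambda>f. {f}) ` A) = (\<lambda>f. {f}) ` (F ` A)" by (auto simp: image_image)
  then show "(\<lambda>S. F ` S) ` ((\<lambda>f. {f}) ` A) = (\<lambda>f. {f}) ` B" using assms unfolding bij_betw_def by simp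
qed

theorem corollary5p7:
  fixes Ag :: "'m::comm_monoid_mult \<Rightarrow> 'a monoid" and Ap :: "'m \<Rightarrow> 'm \<Rightarrow> 'a \<Rightarrow> 'a" and r :: nat
  assumes "HM_module Ag Ap" and "r \<ge> 2"
  shows "HMcoh r r Ag Ap \<cong> HMcoh 1 1 Ag Ap"
proof -
  note HM = assms(1)
  obtain k where r: "r = Suc k" using assms(2) by (cases r) auto
  define G where "G = (Cgrp (Suc k) (Suc k) Ag Ap)\<lparr>carrier := cocycles (Suc k) (Suc k) Ag Ap\<rparr> Mod {one (Cgrp (Suc k) (Suc k) Ag Ap)}"
  define H where "H = (Cgrp (Suc 0) (Suc 0) Ag Ap)\<lparr>carrier := cocycles (Suc 0) (Suc 0) Ag Ap\<rparr> Mod {one (Cgrp (Suc 0) (Suc 0) Ag Ap)}"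
  have eG: "HMcoh r r Ag Ap = G" unfolding HMcoh_def r G_def cobound[OF HM] ..
  have eH: "HMcoh 1 1 Ag Ap = H" unfolding HMcoh_def One_nat_def H_def cobound[OF HM, of 0] ..
  have cG: "carrier G = (\<lambda>f. {f}) ` cocycles (Suc k) (Suc k) Ag Ap" unfolding G_def by (rule mod_carrier[OF HM])
  have cH: "carrier H = (\<lambda>f. {f}) ` cocycles (Suc 0) (Suc 0) Ag Ap" unfolding H_def by (rule mod_carrier[OF HM])
  have bij: "bij_betw (Phi k) (cocycles (Suc k) (Suc k) Ag Ap) (cocycles (Suc 0) (Suc 0) Ag Ap)"
  proof (rule bij_betwI[where g = "Psi k"])
    show "Phi k \<in> cocycles (Suc k) (Suc k) Ag Ap \<rightarrow> cocycles (Suc 0) (Suc 0) Ag Ap"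
      using Phi_coch[OF HM] by blast
    show "Psi k \<in> cocycles (Suc 0) (Suc 0) Ag Ap \<rightarrow> cocycles (Suc k) (Suc k) Ag Ap"
      using Psi_coch[OF HM] by blast
    show "Psi k (Phi k f) = f" if "f \<in> cocycles (Suc k) (Suc k) Ag Ap" for f
      using that Psi_Phi by (auto simp: cocycles_def)
    show "Phi k (Psi k g) = g" if "g \<in> cocycles (Suc 0) (Suc 0) Ag Ap" for g
      using that Phi_Psi by (auto simp: cocycles_def)
  qed
  have hom: "(\<lambda>S. Phi k ` S) \<in> hom G H"
    unfolding hom_def
  proof (intro CollectI conjI ballI)
    show "(\<lambda>S. Phi k ` S) \<in> carrier G \<rightarrow> carrier H"
      unfolding cG cH using Phi_coch[OF HM] by auto
    fix S T assume S: "S \<in> carrier G" and T: "T \<in> carrier G"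
    then obtain f g where fg: "S = {f}" "T = {g}" unfolding cG by auto
    have "mult G S T = {mult (Cgrp (Suc k) (Suc k) Ag Ap) f g}"
      unfolding G_def fg mod_mult by simp
    moreover have "mult H (Phi k ` S) (Phi k ` T) = {mult (Cgrp (Suc 0) (Suc 0) Ag Ap) (Phi k f) (Phi k g)}"
      unfolding H_def fg image_insert image_empty mod_mult by simp
    ultimately show "Phi k ` (mult G S T) = mult H (Phi k ` S) (Phi k ` T)"
      by (simp add: Phi_mult)
  qed
  have "(\<lambda>S. Phi k ` S) \<in> iso G H"
    unfolding iso_def using hom bij_single[OF bij] cG cH by simp
  then show ?thesis unfolding eG eH by (rule is_isoI)
qed

end
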